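(* Let $\alpha\in(0,1)$. For every probability distribution $P$ on the Cantor space $\Omega=\{0,1\}^{\mathbb{N}}$ there exist sets $A_1,A_2,\dots$ of binary strings such that (1) for each $n$, $A_n$ consists of binary strings of length $n$ and $|A_n|\le 2^{\alpha n}$; (2) for $P$-almost every sequence $\omega\in\Omega$, there are infinitely many $i$ such that $\omega$ has a substring belonging to $A_i$.
   Context: A substring of an infinite binary sequence $\omega=\omega_0\omega_1\dots$ is a finite block $\omega_k\omega_{k+1}\dots\omega_{k+\ell-1}$ of consecutive bits. $P$ is a probability measure on the Borel sets of the Cantor space. *)

theory Defs
  imports "HOL-Probability.Probability"
begin

definition has_substring :: "(nat \<Rightarrow> bool) \<Rightarrow> bool list \<Rightarrow> bool" where
  "has_substring \<omega> s \<longleftrightarrow> (\<exists>k. map (\<lambda>j. \<omega> (k + j)) [0..<length s] = s)"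

end

theory Submission
  imports Defs
begin

definition pre :: "(nat \<Rightarrow> bool) \<Rightarrow> nat \<Rightarrow> bool list" where
  "pre \<omega> N = map \<omega> [0..<N]"

definition blocks :: "nat \<Rightarrow> bool list \<Rightarrow> bool list set" where
  "blocks l p = {take l (drop (j*l) p) | j. j < length p div l}"

definition Cc :: "nat \<Rightarrow> bool list set \<Rightarrow> bool list set" where
  "Cc k F = concat ` {ws. set ws \<subseteq> F \<and> length ws = k}"

lemma length_pre[simp]: "length (pre \<omega> N) = N" by (simp add: pre_def)

lemma div_bound: fixes j n l :: nat assumes "j < n div l" shows "j*l + l \<le> n"
proof -
  have "Suc j \<le> n div l" using assms by simp
  hence "Suc j * l \<le> n div l * l" by (rule mult_right_mono) simp
  also have "\<dots> \<le> n" by (rule div_times_less_eq_dividend)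
  finally show ?thesis by simp
qed

lemma blocks_len: "blocks l p \<subseteq> {s. length s = l}"
  using div_bound by (fastforce simp: blocks_def)

lemma blocks_finite: "finite (blocks l p)"
  unfolding blocks_def by (simp add: finite_image_set)

lemma blocks_ne: assumes "0 < l" "l \<le> length p" shows "blocks l p \<noteq> {}"
proof -
  have "0 < length p div l" using assms by (simp add: div_greater_zero_iff)
  thus ?thesis unfolding blocks_def by blast
qed

lemma card_words: "card {s::bool list. length s = l} = 2 ^ l"
  using card_lists_length_eq[of "UNIV::bool set" l] by simp

lemma finite_words: "finite {s::bool list. length s = l}"
  using finite_lists_length_eq[of "UNIV::bool set" l] by simp

lemma card_blocks_le: "card (blocks l p) \<le> 2 ^ l"
  by (metis card_mono card_words finite_words blocks_len)

lemma take_concat_blocks: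
  "a + m*l \<le> length p \<Longrightarrow>
   take (m*l) (drop a p) = concat (map (\<lambda>t. take l (drop (a + t*l) p)) [0..<m])"
proof (induction m)
  case 0 then show ?case by simp
next
  case (Suc m)
  have "take (Suc m * l) (drop a p) = take (m*l + l) (drop a p)" by (simp add: add.commute)
  also have "\<dots> = take (m*l) (drop a p) @ take l (drop (m*l) (drop a p))" by (rule take_add)
  also have "\<dots> = concat (map (\<lambda>t. take l (drop (a + t*l) p)) [0..<m]) @ take l (drop (a + m*l) p)"
    using Suc by (simp add: add.commute)
  finally show ?case by simp
qed

lemma blocks_sub_Cc:
  assumes "l1 = k*l0" "0 < l0"
  shows "blocks l1 p \<subseteq> Cc k (blocks l0 p)"
proof
  fix s assume "s \<in> blocks l1 p"
  then obtain j where j: "j < length p div l1" and s: "s = take l1 (drop (j*l1) p)"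
    unfolding blocks_def by blast
  have b: "j*l1 + l1 \<le> length p" using div_bound[OF j] .
  have s2: "s = concat (map (\<lambda>t. take l0 (drop (j*l1 + t*l0) p)) [0..<k])"
    using s take_concat_blocks[of "j*l1" k l0 p] b assms(1) by (simp add: mult.commute)
  have "take l0 (drop (j*l1 + t*l0) p) \<in> blocks l0 p" if t: "t < k" for t
  proof -
    have e: "j*l1 + t*l0 = (j*k+t)*l0" using assms(1) by (simp add: algebra_simps)
    have "(j*k+t)*l0 + l0 = j*l1 + (t+1)*l0" using assms(1) by (simp add: algebra_simps)
    also have "\<dots> \<le> j*l1 + l1"
    proof -
      have "(t+1)*l0 \<le> k*l0" using t by (intro mult_right_mono) auto
      thus ?thesis using assms(1) by simp
    qed
    finally have "(j*k+t+1)*l0 \<le> length p" using b by (simp add: algebra_simps)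
    hence "Suc (j*k+t) \<le> length p div l0" using assms(2)
      by (subst less_eq_div_iff_mult_less_eq) auto
    hence "j*k+t < length p div l0" by simp
    thus ?thesis unfolding blocks_def using e by auto
  qed
  thus "s \<in> Cc k (blocks l0 p)" unfolding Cc_def s2
    by (intro image_eqI[OF refl]) auto
qed

lemma length_concat_const: "set ws \<subseteq> {s. length s = l} \<Longrightarrow> length (concat ws) = length ws * l"
  by (induction ws) auto

lemma Cc_len: assumes "F \<subseteq> {s. length s = l}" shows "Cc k F \<subseteq> {s. length s = k*l}"
  unfolding Cc_def
proof (rule image_subsetI)
  fix ws assume "ws \<in> {ws. set ws \<subseteq> F \<and> length ws = k}"
  hence "set ws \<subseteq> {s. length s = l}" "length ws = k" using assms by auto
  thus "concat ws \<in> {s. length s = k*l}" using length_concat_const[of ws l] by (simp add: mult.commute)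
qed

lemma Cc_finite: "finite F \<Longrightarrow> finite (Cc k F)"
  unfolding Cc_def by (intro finite_imageI finite_lists_length_eq)

lemma Cc_card: "finite F \<Longrightarrow> card (Cc k F) \<le> card F ^ k"
proof -
  assume f: "finite F"
  have "finite {ws. set ws \<subseteq> F \<and> length ws = k}" using f by (rule finite_lists_length_eq)
  hence "card (Cc k F) \<le> card {ws. set ws \<subseteq> F \<and> length ws = k}" unfolding Cc_def by (rule card_image_le)
  thus ?thesis using card_lists_length_eq[OF f] by simp
qed

lemma Cc_ne: "F \<noteq> {} \<Longrightarrow> Cc k F \<noteq> {}"
proof -
  assume "F \<noteq> {}" then obtain x where "x \<in> F" by blast
  hence "concat (replicate k x) \<in> Cc k F" unfolding Cc_def by (intro imageI) auto
  thus ?thesis by blast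
qed

lemma blocks_pre_sub:
  assumes "s \<in> blocks l (pre \<omega> N)" shows "has_substring \<omega> s"
proof -
  obtain j where j: "j < N div l" and s: "s = take l (drop (j*l) (pre \<omega> N))"
    using assms unfolding blocks_def by auto
  have b: "j*l + l \<le> N" using div_bound[OF j] .
  have "map (\<lambda>t. \<omega> (j*l + t)) [0..<l] = take l (drop (j*l) (pre \<omega> N))"
    apply (rule nth_equalityI) using b by (simp_all add: pre_def)
  moreover have "length s = l" using s b by simp
  ultimately have "map (\<lambda>t. \<omega> (j*l + t)) [0..<length s] = s" using s by simp
  thus ?thesis unfolding has_substring_def by blast
qed


lemma cyl_meas: "{\<omega>::nat\<Rightarrow>bool. \<forall>j<n. \<omega> j = f j} \<in> sets borel"
proof (induction n)
  case 0 then show ?case by simp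
next
  case (Suc n)
  have m: "(\<lambda>\<omega>::nat\<Rightarrow>bool. \<omega> n) \<in> borel_measurable borel"
    by (rule borel_measurable_continuous_onI) simp
  have "{f n} \<in> sets (borel::bool measure)" by (simp add: open_discrete)
  hence "(\<lambda>\<omega>::nat\<Rightarrow>bool. \<omega> n) -` {f n} \<inter> space borel \<in> sets borel"
    using m measurable_sets by blast
  hence c: "{\<omega>::nat\<Rightarrow>bool. \<omega> n = f n} \<in> sets borel" by (simp add: vimage_def)
  have "{\<omega>::nat\<Rightarrow>bool. \<forall>j<Suc n. \<omega> j = f j} = {\<omega>. \<forall>j<n. \<omega> j = f j} \<inter> {\<omega>. \<omega> n = f n}"
    by (auto simp: less_Suc_eq)
  thus ?case using Suc c by simp
qed

lemma pre_meas: assumes "sets P = sets (borel::(nat\<Rightarrow>bool) measure)"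
  shows "{\<omega>. \<Phi> (pre \<omega> N)} \<in> sets P"
proof -
  have e: "{\<omega>. \<Phi> (pre \<omega> N)} = (\<Union>xs\<in>{xs. length xs = N \<and> \<Phi> xs}. {\<omega>. \<forall>j<N. \<omega> j = xs ! j})"
  proof (rule set_eqI, rule iffI)
    fix \<omega> assume "\<omega> \<in> {\<omega>. \<Phi> (pre \<omega> N)}"
    thus "\<omega> \<in> (\<Union>xs\<in>{xs. length xs = N \<and> \<Phi> xs}. {\<omega>. \<forall>j<N. \<omega> j = xs ! j})"
      by (intro UN_I[of "pre \<omega> N"]) (auto simp: pre_def)
  next
    fix \<omega> assume "\<omega> \<in> (\<Union>xs\<in>{xs. length xs = N \<and> \<Phi> xs}. {\<omega>. \<forall>j<N. \<omega> j = xs ! j})"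
    then obtain xs where h: "length xs = N" "\<Phi> xs" "\<forall>j<N. \<omega> j = xs ! j" by blast
    have "pre \<omega> N = xs" using h by (intro nth_equalityI) (auto simp: pre_def)
    thus "\<omega> \<in> {\<omega>. \<Phi> (pre \<omega> N)}" using h by simp
  qed
  have fin: "finite {xs::bool list. length xs = N \<and> \<Phi> xs}"
    by (rule finite_subset[OF _ finite_words[of N]]) auto
  have "(\<Union>xs\<in>{xs. length xs = N \<and> \<Phi> xs}. {\<omega>::nat\<Rightarrow>bool. \<forall>j<N. \<omega> j = xs ! j}) \<in> sets borel"
    using fin cyl_meas by (intro sets.finite_UN) auto
  thus ?thesis using e assms by simp
qed

lemma frac_ineq:
  fixes c s lam :: real
  assumes "0 \<le> s" "s \<le> c" "0 < c" "lam * c \<le> real M * s"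
  shows "(c - s) ^ M \<le> exp (- lam) * c ^ M"
proof -
  define x where "x = s / c"
  have x0: "0 \<le> 1 - x" using assms by (simp add: x_def)
  have "c - s = c * (1 - x)" using assms by (simp add: x_def field_simps)
  hence e1: "(c - s) ^ M = c ^ M * (1 - x) ^ M" by (simp add: power_mult_distrib)
  have e2: "(1 - x) ^ M \<le> exp (- x) ^ M"
    using x0 exp_ge_add_one_self[of "-x"] by (intro power_mono) auto
  have e3: "exp (- x) ^ M = exp (- (real M * x))" by (simp add: exp_of_nat_mult[symmetric])
  have e4: "exp (- (real M * x)) \<le> exp (- lam)"
  proof -
    have "lam \<le> real M * s / c" using assms by (simp add: field_simps)
    thus ?thesis by (simp add: x_def)
  qed
  have "(1 - x) ^ M \<le> exp (- lam)" using order_trans[OF e2[unfolded e3] e4] .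
  hence "c ^ M * (1 - x) ^ M \<le> c ^ M * exp (- lam)" using assms by (intro mult_left_mono) auto
  thus ?thesis using e1 by (simp add: mult.commute)
qed

lemma card_PiE_restrict:
  assumes fin: "finite I" and i0: "i0 \<in> I" and X: "X \<subseteq> B i0" and fB: "\<And>i. i \<in> I \<Longrightarrow> finite (B i)"
  shows "card {c \<in> PiE I B. c i0 \<in> X} * card (B i0) = card X * card (PiE I B)"
proof -
  have e: "{c \<in> PiE I B. c i0 \<in> X} = PiE I (B(i0 := X))"
    using X i0 unfolding PiE_def Pi_def extensional_def by (auto split: if_splits)
  have "card (PiE I (B(i0 := X))) = card X * (\<Prod>i\<in>I-{i0}. card (B i))"
    using fin i0 by (simp add: card_PiE prod.remove)
  moreover have "card (PiE I B) = card (B i0) * (\<Prod>i\<in>I-{i0}. card (B i))"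
    using fin i0 by (simp add: card_PiE prod.remove)
  ultimately show ?thesis using e by simp
qed


lemma sum_ind_card: "finite C \<Longrightarrow> (\<Sum>c\<in>C. indicator (E c) w :: real) = real (card {c\<in>C. w \<in> E c})"
proof -
  assume f: "finite C"
  have "(\<Sum>c\<in>C. indicator (E c) w :: real) = (\<Sum>c\<in>{c\<in>C. w \<in> E c}. 1)"
    using f by (simp add: indicator_def sum.If_cases Int_def)
  thus ?thesis by simp
qed

lemma level:
  fixes lam :: real
  assumes Pp: "prob_space P" and sP: "sets P = sets (borel::(nat\<Rightarrow>bool) measure)"
    and l0: "0 < l0" and k: "0 < k" and l1: "l1 = k*l0" and N: "l1 \<le> N" and M: "0 < M" and lam: "0 \<le> lam"
  shows "\<exists>A. A \<subseteq> {s. length s = l1} \<and> card A \<le> 2^(2^l0) * M \<and>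
     measure P {\<omega>. lam * real (card (Cc k (blocks l0 (pre \<omega> N)))) \<le> real M * real (card (blocks l1 (pre \<omega> N)))
                    \<and> A \<inter> blocks l1 (pre \<omega> N) = {}} \<le> exp(-lam)"
proof -
  interpret prob_space P by fact
  define W where "W = {s::bool list. length s = l0}"
  define Fams where "Fams = {F. F \<subseteq> W \<and> F \<noteq> {}}"
  define B where "B = (\<lambda>F. PiE {..<M} (\<lambda>_. Cc k F))"
  define Ch where "Ch = PiE Fams B"
  define Af where "Af = (\<lambda>c::bool list set \<Rightarrow> nat \<Rightarrow> bool list. \<Union>F\<in>Fams. c F ` {..<M})"
  define high where "high = (\<lambda>p. lam * real (card (Cc k (blocks l0 p))) \<le> real M * real (card (blocks l1 p)))"
  define E where "E = (\<lambda>c. {\<omega>. high (pre \<omega> N) \<and> Af c \<inter> blocks l1 (pre \<omega> N) = {}})"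
  have fW: "finite W" unfolding W_def by (rule finite_words)
  have fF: "finite Fams" unfolding Fams_def by (rule finite_subset[of _ "Pow W"]) (use fW in auto)
  have cF: "card Fams \<le> 2^(2^l0)"
  proof -
    have "card Fams \<le> card (Pow W)" unfolding Fams_def by (rule card_mono) (use fW in auto)
    also have "\<dots> = 2^(2^l0)" using fW by (simp add: card_Pow W_def card_words)
    finally show ?thesis .
  qed
  have finF: "F \<in> Fams \<Longrightarrow> finite F" for F unfolding Fams_def using fW finite_subset by blast
  have fB: "F \<in> Fams \<Longrightarrow> finite (B F)" for F unfolding B_def using finF Cc_finite by (simp add: finite_PiE)
  have neB: "F \<in> Fams \<Longrightarrow> B F \<noteq> {}" for F unfolding B_def Fams_def using Cc_ne by (simp add: PiE_eq_empty_iff)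
  have fCh: "finite Ch" unfolding Ch_def using fF fB by (simp add: finite_PiE)
  have neCh: "Ch \<noteq> {}" unfolding Ch_def using neB by (simp add: PiE_eq_empty_iff)
  have cChpos: "0 < card Ch" using fCh neCh by (simp add: card_gt_0_iff)
  have Aflen: "Af c \<subseteq> {s. length s = l1}" if c: "c \<in> Ch" for c
  proof
    fix s assume "s \<in> Af c"
    then obtain F m where F: "F \<in> Fams" and m: "m < M" and s: "s = c F m" unfolding Af_def by auto
    have "c F \<in> B F" using c F unfolding Ch_def by auto
    hence "s \<in> Cc k F" using m s unfolding B_def by auto
    moreover have "Cc k F \<subseteq> {s. length s = k*l0}" using F by (intro Cc_len) (auto simp: Fams_def W_def)
    ultimately show "s \<in> {s. length s = l1}" using l1 by auto
  qed
  have Afcard: "card (Af c) \<le> 2^(2^l0) * M" for c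
  proof -
    have "card (Af c) \<le> (\<Sum>F\<in>Fams. card (c F ` {..<M}))" unfolding Af_def by (rule card_UN_le[OF fF])
    also have "\<dots> \<le> (\<Sum>F\<in>Fams. M)"
    proof (intro sum_mono)
      fix F show "card (c F ` {..<M}) \<le> M" using card_image_le[of "{..<M}" "c F"] by simp
    qed
    also have "\<dots> = card Fams * M" by simp
    also have "\<dots> \<le> 2^(2^l0) * M" using cF by simp
    finally show ?thesis .
  qed
  have Emeas: "E c \<in> sets P" for c unfolding E_def using pre_meas[OF sP, of "\<lambda>p. high p \<and> Af c \<inter> blocks l1 p = {}" N] by simp
  have point: "real (card {c\<in>Ch. \<omega> \<in> E c}) \<le> exp(-lam) * card Ch" for \<omega>
  proof (cases "high (pre \<omega> N)")
    case False
    hence e: "{c\<in>Ch. \<omega> \<in> E c} = {}" unfolding E_def by auto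
    show ?thesis by (simp only: e card.empty of_nat_0) simp
  next
    case True
    define F where "F = blocks l0 (pre \<omega> N)"
    define S where "S = blocks l1 (pre \<omega> N)"
    have "l0 \<le> l1" using l1 k by simp
    hence l0N: "l0 \<le> length (pre \<omega> N)" using N by simp
    have FF: "F \<in> Fams" unfolding F_def Fams_def W_def
      using blocks_len[of l0 "pre \<omega> N"] blocks_ne[OF l0 l0N] by blast
    have SC: "S \<subseteq> Cc k F" unfolding S_def F_def using blocks_sub_Cc l1 l0 by blast
    have fC: "finite (Cc k F)" using Cc_finite finF[OF FF] by blast
    define X where "X = PiE {..<M} (\<lambda>_. Cc k F - S)"
    have XB: "X \<subseteq> B F" unfolding X_def B_def by (auto simp: PiE_iff)
    have sub: "{c\<in>Ch. \<omega> \<in> E c} \<subseteq> {c\<in>Ch. c F \<in> X}"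
    proof clarify
      fix c assume c: "c \<in> Ch" and w: "\<omega> \<in> E c"
      have cB: "c F \<in> B F" using c FF unfolding Ch_def by auto
      have "c F m \<notin> S" if m: "m < M" for m
      proof -
        have "c F m \<in> Af c" unfolding Af_def using FF m by blast
        moreover have "Af c \<inter> S = {}" using w unfolding E_def S_def by simp
        ultimately show ?thesis by blast
      qed
      thus "c F \<in> X" using cB unfolding X_def B_def by (auto simp: PiE_iff)
    qed
    have eq: "card {c\<in>Ch. c F \<in> X} * card (B F) = card X * card Ch"
      using card_PiE_restrict[of Fams F X B, OF fF FF XB fB] unfolding Ch_def .
    have cX: "card X = (card (Cc k F) - card S) ^ M" unfolding X_def
      using fC SC by (simp add: card_PiE card_Diff_subset finite_subset)
    have cBF: "card (B F) = card (Cc k F) ^ M" unfolding B_def by (simp add: card_PiE)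
    have cpos: "0 < card (Cc k F)" using fC Cc_ne FF unfolding Fams_def by (simp add: card_gt_0_iff)
    have sle: "card S \<le> card (Cc k F)" using SC fC by (rule card_mono[rotated])
    have hi: "lam * real (card (Cc k F)) \<le> real M * real (card S)" using True unfolding high_def F_def S_def by simp
    have "real (card X) = (real (card (Cc k F)) - real (card S)) ^ M" using cX sle by (simp add: of_nat_diff)
    also have "\<dots> \<le> exp (-lam) * real (card (Cc k F)) ^ M"
      using sle cpos hi by (intro frac_ineq) auto
    finally have X1: "real (card X) \<le> exp (-lam) * real (card (B F))" using cBF by simp
    have BFpos: "0 < real (card (B F))" using cBF cpos by simp
    have "real (card {c\<in>Ch. c F \<in> X}) * real (card (B F)) = real (card X) * real (card Ch)"
      using arg_cong[OF eq, of real] by simp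
    also have "\<dots> \<le> exp (-lam) * real (card (B F)) * real (card Ch)"
      using X1 by (intro mult_right_mono) auto
    also have "\<dots> = (exp (-lam) * real (card Ch)) * real (card (B F))" by (simp only: ac_simps)
    finally have "real (card {c\<in>Ch. c F \<in> X}) \<le> exp (-lam) * real (card Ch)"
      using BFpos by (rule mult_right_le_imp_le)
    moreover have "card {c\<in>Ch. \<omega> \<in> E c} \<le> card {c\<in>Ch. c F \<in> X}"
      using sub fCh by (intro card_mono) auto
    ultimately show ?thesis by linarith
  qed
  have sumle: "(\<Sum>c\<in>Ch. measure P (E c)) \<le> exp(-lam) * card Ch"
  proof -
    have sp: "space P = UNIV" using sets_eq_imp_space_eq[OF sP] by simp
    have int: "integrable P (indicator (E c) :: _ \<Rightarrow> real)" for c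
      using Emeas by (intro integrable_real_indicator) (auto simp: less_top[symmetric])
    have "(\<Sum>c\<in>Ch. measure P (E c)) = (\<Sum>c\<in>Ch. integral\<^sup>L P (indicator (E c)))"
      using sp by simp
    also have "\<dots> = integral\<^sup>L P (\<lambda>w. \<Sum>c\<in>Ch. indicator (E c) w)"
      using int by (simp add: integral_sum)
    also have "\<dots> \<le> integral\<^sup>L P (\<lambda>w. exp(-lam) * card Ch)"
    proof (rule integral_mono)
      show "integrable P (\<lambda>w. \<Sum>c\<in>Ch. indicator (E c) w :: real)" by (rule Bochner_Integration.integrable_sum) (rule int)
      show "integrable P (\<lambda>w. exp(-lam) * real (card Ch))" by simp
      fix w show "(\<Sum>c\<in>Ch. indicator (E c) w :: real) \<le> exp(-lam) * real (card Ch)"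
        using point[of w] by (simp only: sum_ind_card[OF fCh])
    qed
    also have "\<dots> = exp(-lam) * card Ch" by (simp add: prob_space)
    finally show ?thesis .
  qed
  have "\<exists>c\<in>Ch. measure P (E c) \<le> exp(-lam)"
  proof (rule ccontr)
    assume "\<not> ?thesis"
    hence "\<forall>c\<in>Ch. exp(-lam) < measure P (E c)" by auto
    hence "(\<Sum>c\<in>Ch. exp(-lam)) < (\<Sum>c\<in>Ch. measure P (E c))"
      using fCh neCh by (intro sum_strict_mono) auto
    thus False using sumle by (simp add: mult.commute)
  qed
  then obtain c where c: "c \<in> Ch" "measure P (E c) \<le> exp(-lam)" by blast
  show ?thesis
    using Aflen[OF c(1)] Afcard[of c] c(2) unfolding E_def high_def by blast
qed

lemma rate:
  fixes b :: "nat \<Rightarrow> real" and L K :: "nat \<Rightarrow> nat" and \<alpha> :: real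
  assumes a: "0 < \<alpha>" and r: "2 < real r * \<alpha>" and Lpos: "0 < L r"
    and b1: "1 \<le> b r" and b0: "b 0 \<le> 2 ^ L 0" and bnn: "\<And>i. 0 \<le> b i"
    and LK: "\<And>i. L (Suc i) = K i * L i"
    and step: "\<And>i. i < r \<Longrightarrow> b (Suc i) \<le> b i ^ K i * 2 powr (- (\<alpha> * L (Suc i) / 2))"
  shows False
proof -
  have claim: "i \<le> r \<Longrightarrow> b i \<le> 2 powr (L i * (1 - i * \<alpha> / 2))" for i
  proof (induction i)
    case 0 then show ?case using b0 by (simp add: powr_realpow)
  next
    case (Suc i)
    have "b (Suc i) \<le> b i ^ K i * 2 powr (- (\<alpha> * L (Suc i) / 2))" using step Suc by simp
    also have "\<dots> \<le> (2 powr (L i * (1 - i * \<alpha> / 2))) ^ K i * 2 powr (- (\<alpha> * L (Suc i) / 2))"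
      using Suc bnn by (intro mult_right_mono power_mono) auto
    also have "\<dots> = 2 powr (K i * (L i * (1 - i * \<alpha> / 2))) * 2 powr (- (\<alpha> * L (Suc i) / 2))"
      by (simp only: powr_power)
    also have "\<dots> = 2 powr (K i * (L i * (1 - i * \<alpha> / 2)) + (- (\<alpha> * L (Suc i) / 2)))"
      by (rule powr_add[symmetric])
    also have "K i * (L i * (1 - i * \<alpha> / 2)) + (- (\<alpha> * L (Suc i) / 2)) = L (Suc i) * (1 - Suc i * \<alpha> / 2)"
      by (simp add: LK algebra_simps)
    finally show ?case .
  qed
  have "b r \<le> 2 powr (L r * (1 - r * \<alpha> / 2))" using claim by simp
  also have "\<dots> < 2 powr 0"
    using r Lpos by (intro powr_less_mono) (auto simp: mult_pos_neg)
  finally show False using b1 by simp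
qed


lemma config:
  fixes \<alpha> \<epsilon> :: real and P :: "(nat \<Rightarrow> bool) measure"
  assumes Pp: "prob_space P" and sP: "sets P = sets (borel::(nat\<Rightarrow>bool) measure)"
    and a0: "0 < \<alpha>" and a1: "\<alpha> < 1" and e0: "0 < \<epsilon>"
  shows "\<exists>B::nat \<Rightarrow> bool list set. \<exists>N1 W \<Phi>. N0 < N1 \<and>
    (\<forall>n. B n \<subseteq> {s. length s = n} \<and> real (card (B n)) \<le> 2 powr (\<alpha> * real n)) \<and>
    (\<forall>n. B n \<noteq> {} \<longrightarrow> N0 \<le> n \<and> n < N1) \<and>
    measure P {\<omega>. \<Phi> (pre \<omega> W)} \<le> \<epsilon> \<and>
    (\<forall>\<omega>. \<not> \<Phi> (pre \<omega> W) \<longrightarrow> (\<exists>n. \<exists>s\<in>B n. has_substring \<omega> s))"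
proof -
  interpret prob_space P by fact
  define r where "r = nat \<lceil>2/\<alpha>\<rceil> + 1"
  have r1: "1 \<le> r" unfolding r_def by simp
  have ra: "2 < real r * \<alpha>"
  proof -
    have "2/\<alpha> \<le> real (nat \<lceil>2/\<alpha>\<rceil>)" by (rule real_nat_ceiling_ge)
    hence "2/\<alpha> + 1 \<le> real r" unfolding r_def by simp
    hence "(2/\<alpha> + 1) * \<alpha> \<le> real r * \<alpha>" using a0 by (intro mult_right_mono) auto
    moreover have "(2/\<alpha> + 1) * \<alpha> = 2 + \<alpha>" using a0 by (simp add: field_simps)
    ultimately show ?thesis using a0 by linarith
  qed
  define lam where "lam = \<bar>ln (real r / \<epsilon>)\<bar>"
  have lam0: "0 \<le> lam" unfolding lam_def by simp
  have elam: "real r * exp (- lam) \<le> \<epsilon>"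
  proof -
    have rp: "0 < real r / \<epsilon>" using r1 e0 by simp
    have "exp (- lam) \<le> exp (- ln (real r / \<epsilon>))" unfolding lam_def by simp
    also have "\<dots> = \<epsilon> / real r" using rp by (simp add: exp_minus exp_ln)
    finally show ?thesis using r1 by (simp add: field_simps)
  qed
  define Kf where "Kf = (\<lambda>l::nat. nat \<lceil>2 * log 2 ((lam+2) * 2^(2^l)) / (\<alpha> * l)\<rceil> + 2)"
  define L where "L = rec_nat (N0+1) (\<lambda>_ l. Kf l * l)"
  have L0: "L 0 = N0 + 1" unfolding L_def by simp
  have LS: "L (Suc i) = Kf (L i) * L i" for i unfolding L_def by simp
  have Kf2: "2 \<le> Kf l" for l unfolding Kf_def by simp
  have Lpos: "0 < L i" for i
  proof (induction i)
    case 0 show ?case by (simp add: L0)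
  next
    case (Suc i)
    have "0 < Kf (L i)" using Kf2[of "L i"] by linarith
    thus ?case using Suc by (simp add: LS)
  qed
  have Lsuc: "L i < L (Suc i)" for i
  proof -
    have "1 * L i < Kf (L i) * L i" using Kf2[of "L i"] Lpos[of i] by (intro mult_strict_right_mono) auto
    thus ?thesis by (simp add: LS)
  qed
  have Lsm: "strict_mono L" using Lsuc by (simp add: strict_mono_Suc_iff)
  have LN0: "N0 < L i" for i
  proof -
    have "L 0 \<le> L i" using Lsm by (simp add: strict_mono_less_eq)
    thus ?thesis using L0 by simp
  qed
  have KfP: "(lam+2) * 2^(2^l) \<le> 2 powr (\<alpha> * (Kf l * l) / 2)" if l: "0 < l" for l
  proof -
    define y where "y = (lam+2) * 2^(2^l)"
    have y0: "0 < y" unfolding y_def using lam0 by simp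
    have "2 * log 2 y / (\<alpha> * l) \<le> real (nat \<lceil>2 * log 2 y / (\<alpha> * l)\<rceil>)" by (rule real_nat_ceiling_ge)
    also have "\<dots> \<le> real (Kf l)" unfolding Kf_def y_def by simp
    finally have "2 * log 2 y / (\<alpha> * l) \<le> real (Kf l)" .
    hence "2 * log 2 y \<le> real (Kf l) * (\<alpha> * l)" using a0 l by (simp add: field_simps)
    hence "log 2 y \<le> \<alpha> * (Kf l * l) / 2" by (simp add: field_simps)
    hence "2 powr (log 2 y) \<le> 2 powr (\<alpha> * (Kf l * l) / 2)" by simp
    thus ?thesis using y0 unfolding y_def by simp
  qed
  define Mf where "Mf = (\<lambda>i. nat \<lceil>lam * 2 powr (\<alpha> * L (Suc i) / 2)\<rceil> + 1)"
  have Mpos: "0 < Mf i" for i unfolding Mf_def by simp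
  have Mge: "lam * 2 powr (\<alpha> * L (Suc i) / 2) \<le> real (Mf i)" for i
  proof -
    have "lam * 2 powr (\<alpha> * L (Suc i) / 2) \<le> real (nat \<lceil>lam * 2 powr (\<alpha> * L (Suc i) / 2)\<rceil>)"
      by (rule real_nat_ceiling_ge)
    thus ?thesis unfolding Mf_def by simp
  qed
  have Mcard: "real (2^(2^(L i)) * Mf i) \<le> 2 powr (\<alpha> * L (Suc i))" for i
  proof -
    define y where "y = 2 powr (\<alpha> * L (Suc i) / 2)"
    have y1: "1 \<le> y" unfolding y_def using a0 by (intro ge_one_powr_ge_zero) auto
    have "real (Mf i) \<le> lam * y + 2"
    proof -
      have "0 \<le> lam * y" using lam0 y1 by simp
      hence "real (nat \<lceil>lam * y\<rceil>) \<le> lam * y + 1" by linarith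
      thus ?thesis unfolding Mf_def y_def by simp
    qed
    also have "\<dots> \<le> (lam + 2) * y" using y1 lam0 by (simp add: algebra_simps)
    finally have M1: "real (Mf i) \<le> (lam + 2) * y" .
    have "real (2^(2^(L i)) * Mf i) = 2^(2^(L i)) * real (Mf i)" by simp
    also have "\<dots> \<le> 2^(2^(L i)) * ((lam + 2) * y)" using M1 by (intro mult_left_mono) auto
    also have "\<dots> = ((lam+2) * 2^(2^(L i))) * y" by (simp add: ac_simps)
    also have "\<dots> \<le> y * y"
      using KfP[OF Lpos[of i]] y1 unfolding y_def LS by (intro mult_right_mono) (auto simp: ac_simps)
    also have "y * y = 2 powr (\<alpha> * L (Suc i))" unfolding y_def by (simp add: powr_add[symmetric])
    finally show ?thesis .
  qed
  define E where "E = (\<lambda>i A. {\<omega>. lam * real (card (Cc (Kf (L i)) (blocks (L i) (pre \<omega> (L r))))) \<le> real (Mf i) * real (card (blocks (L (Suc i)) (pre \<omega> (L r))))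
                    \<and> A \<inter> blocks (L (Suc i)) (pre \<omega> (L r)) = {}})"
  have "\<forall>i. \<exists>A. i < r \<longrightarrow> A \<subseteq> {s. length s = L (Suc i)} \<and> card A \<le> 2^(2^(L i)) * Mf i \<and> measure P (E i A) \<le> exp (- lam)"
  proof
    fix i show "\<exists>A. i < r \<longrightarrow> A \<subseteq> {s. length s = L (Suc i)} \<and> card A \<le> 2^(2^(L i)) * Mf i \<and> measure P (E i A) \<le> exp (- lam)"
    proof (cases "i < r")
      case True
      have "L (Suc i) \<le> L r" using True Lsm by (simp add: strict_mono_less_eq)
      from level[OF Pp sP Lpos[of i] _ LS[of i] this Mpos[of i] lam0] Kf2[of "L i"]
      show ?thesis unfolding E_def by auto
    qed auto
  qed
  then obtain Af where Af: "\<And>i. i < r \<Longrightarrow> Af i \<subseteq> {s. length s = L (Suc i)} \<and> card (Af i) \<le> 2^(2^(L i)) * Mf i \<and> measure P (E i (Af i)) \<le> exp (- lam)"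
    by metis
  define B where "B = (\<lambda>n. \<Union>i\<in>{i. i < r \<and> L (Suc i) = n}. Af i)"
  define \<Phi> where "\<Phi> = (\<lambda>p. \<forall>i<r. Af i \<inter> blocks (L (Suc i)) p = {})"
  have injL: "inj L" using Lsm by (rule strict_mono_imp_inj_on)
  have Bi: "B (L (Suc i)) = Af i" if "i < r" for i
  proof -
    have "{i'. i' < r \<and> L (Suc i') = L (Suc i)} = {i}" using that injL by (auto dest: injD)
    thus ?thesis unfolding B_def by simp
  qed
  have Bprops: "B n \<subseteq> {s. length s = n} \<and> real (card (B n)) \<le> 2 powr (\<alpha> * real n)" for n
  proof (cases "\<exists>i<r. L (Suc i) = n")
    case True
    then obtain i where i: "i < r" "n = L (Suc i)" by auto
    have "real (card (B n)) \<le> real (2^(2^(L i)) * Mf i)" using Af[OF i(1)] Bi[OF i(1)] i(2) by (simp only: of_nat_le_iff)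
    also have "\<dots> \<le> 2 powr (\<alpha> * real n)" using Mcard[of i] i(2) by simp
    finally show ?thesis using Af[OF i(1)] Bi[OF i(1)] i(2) by simp
  next
    case False
    hence "B n = {}" unfolding B_def by auto
    thus ?thesis by simp
  qed
  have Bsupp: "B n \<noteq> {} \<longrightarrow> N0 \<le> n \<and> n < L r + 1" for n
  proof
    assume "B n \<noteq> {}"
    then obtain i where i: "i < r" "L (Suc i) = n" unfolding B_def by auto
    have "L (Suc i) \<le> L r" using i(1) strict_mono_less_eq[OF Lsm, of "Suc i" r] by simp
    thus "N0 \<le> n \<and> n < L r + 1" using i LN0[of "Suc i"] by simp
  qed
  have hit: "\<not> \<Phi> (pre \<omega> (L r)) \<longrightarrow> (\<exists>n. \<exists>s\<in>B n. has_substring \<omega> s)" for \<omega>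
  proof
    assume "\<not> \<Phi> (pre \<omega> (L r))"
    then obtain i s where i: "i < r" and s: "s \<in> Af i" "s \<in> blocks (L (Suc i)) (pre \<omega> (L r))"
      unfolding \<Phi>_def by blast
    have "has_substring \<omega> s" using blocks_pre_sub[OF s(2)] .
    moreover have "s \<in> B (L (Suc i))" using Bi[OF i] s by simp
    ultimately show "\<exists>n. \<exists>s\<in>B n. has_substring \<omega> s" by blast
  qed
  have cover: "{\<omega>. \<Phi> (pre \<omega> (L r))} \<subseteq> (\<Union>i\<in>{..<r}. E i (Af i))"
  proof
    fix \<omega> assume w: "\<omega> \<in> {\<omega>. \<Phi> (pre \<omega> (L r))}"
    define p where "p = pre \<omega> (L r)"
    define b where "b = (\<lambda>i. real (card (blocks (L i) p)))"
    have "\<exists>i<r. lam * real (card (Cc (Kf (L i)) (blocks (L i) p))) \<le> real (Mf i) * b (Suc i)"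
    proof (rule ccontr)
      assume nh: "\<not> ?thesis"
      show False
      proof (rule rate[of \<alpha> r L b "\<lambda>i. Kf (L i)"])
        show "0 < \<alpha>" by fact
        show "2 < real r * \<alpha>" by fact
        show "0 < L r" by (rule Lpos)
        show "1 \<le> b r"
        proof -
          have "blocks (L r) p \<noteq> {}" using blocks_ne[of "L r" p] Lpos unfolding p_def by simp
          hence "0 < card (blocks (L r) p)" using blocks_finite by (simp add: card_gt_0_iff)
          thus ?thesis unfolding b_def by simp
        qed
        show "b 0 \<le> 2 ^ L 0" unfolding b_def using card_blocks_le[of "L 0" p]
          by (metis of_nat_le_iff of_nat_numeral of_nat_power)
        show "0 \<le> b i" for i unfolding b_def by simp
        show "L (Suc i) = Kf (L i) * L i" for i by (rule LS)
        fix i assume i: "i < r"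
        have lo: "real (Mf i) * b (Suc i) < lam * real (card (Cc (Kf (L i)) (blocks (L i) p)))"
          using nh i by auto
        also have "\<dots> \<le> lam * b i ^ Kf (L i)"
          using Cc_card[OF blocks_finite, of "Kf (L i)" "L i" p] lam0 unfolding b_def
          by (intro mult_left_mono) (simp_all add: of_nat_le_iff[symmetric] del: of_nat_le_iff)
        also have "\<dots> \<le> (real (Mf i) * 2 powr (- (\<alpha> * L (Suc i) / 2))) * b i ^ Kf (L i)"
        proof (intro mult_right_mono)
          have "lam = lam * 2 powr (\<alpha> * L (Suc i) / 2) * 2 powr (- (\<alpha> * L (Suc i) / 2))"
            by (simp add: powr_minus)
          also have "\<dots> \<le> real (Mf i) * 2 powr (- (\<alpha> * L (Suc i) / 2))"
            using Mge[of i] by (intro mult_right_mono) auto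
          finally show "lam \<le> real (Mf i) * 2 powr (- (\<alpha> * L (Suc i) / 2))" .
          show "0 \<le> b i ^ Kf (L i)" unfolding b_def by simp
        qed
        also have "\<dots> = real (Mf i) * (b i ^ Kf (L i) * 2 powr (- (\<alpha> * L (Suc i) / 2)))"
          by (simp only: ac_simps)
        finally have "real (Mf i) * b (Suc i) < real (Mf i) * (b i ^ Kf (L i) * 2 powr (- (\<alpha> * L (Suc i) / 2)))" .
        thus "b (Suc i) \<le> b i ^ Kf (L i) * 2 powr (- (\<alpha> * L (Suc i) / 2))"
          using Mpos[of i] by (simp add: mult_less_cancel_left_pos)
      qed
    qed
    then obtain i where i: "i < r" and hi: "lam * real (card (Cc (Kf (L i)) (blocks (L i) p))) \<le> real (Mf i) * b (Suc i)"
      by blast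
    have "\<omega> \<in> E i (Af i)" using hi w i unfolding E_def b_def p_def \<Phi>_def by auto
    thus "\<omega> \<in> (\<Union>i\<in>{..<r}. E i (Af i))" using i by blast
  qed
  have Emeas: "E i A \<in> sets P" for i A unfolding E_def
    using pre_meas[OF sP, of "\<lambda>p. lam * real (card (Cc (Kf (L i)) (blocks (L i) p))) \<le> real (Mf i) * real (card (blocks (L (Suc i)) p)) \<and> A \<inter> blocks (L (Suc i)) p = {}" "L r"]
    by simp
  have "measure P {\<omega>. \<Phi> (pre \<omega> (L r))} \<le> measure P (\<Union>i\<in>{..<r}. E i (Af i))"
    using cover Emeas by (intro finite_measure_mono) auto
  also have "\<dots> \<le> (\<Sum>i<r. measure P (E i (Af i)))"
    using Emeas by (intro finite_measure_subadditive_finite) auto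
  also have "\<dots> \<le> (\<Sum>i<r. exp (- lam))" using Af by (intro sum_mono) auto
  also have "\<dots> = real r * exp (- lam)" by simp
  also have "\<dots> \<le> \<epsilon>" by (rule elam)
  finally have meas: "measure P {\<omega>. \<Phi> (pre \<omega> (L r))} \<le> \<epsilon>" .
  show ?thesis
    apply (rule exI[of _ B], rule exI[of _ "L r + 1"], rule exI[of _ "L r"], rule exI[of _ \<Phi>])
    using LN0[of r] Bprops Bsupp meas hit by auto
qed

theorem theorem4:
  fixes \<alpha> :: real and P :: "(nat \<Rightarrow> bool) measure"
  assumes "0 < \<alpha>" "\<alpha> < 1"
    and "prob_space P" and "sets P = sets (borel :: (nat \<Rightarrow> bool) measure)"
  shows "\<exists>A :: nat \<Rightarrow> bool list set.
           (\<forall>n\<ge>1. A n \<subseteq> {s. length s = n} \<and> real (card (A n)) \<le> 2 powr (\<alpha> * real n)) \<and>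
           (AE \<omega> in P. infinite {i. i \<ge> 1 \<and> (\<exists>s\<in>A i. has_substring \<omega> s)})"
proof -
  note a0 = assms(1) and a1 = assms(2) and Pp = assms(3) and sP = assms(4)
  interpret prob_space P by fact
  define Good where "Good = (\<lambda>N0 j (B::nat \<Rightarrow> bool list set) N1 W \<Phi>. N0 < N1 \<and>
    (\<forall>n. B n \<subseteq> {s. length s = n} \<and> real (card (B n)) \<le> 2 powr (\<alpha> * real n)) \<and>
    (\<forall>n. B n \<noteq> {} \<longrightarrow> N0 \<le> n \<and> n < N1) \<and>
    measure P {\<omega>. \<Phi> (pre \<omega> W)} \<le> (1/2::real)^j \<and>
    (\<forall>\<omega>. \<not> \<Phi> (pre \<omega> W) \<longrightarrow> (\<exists>n. \<exists>s\<in>B n. has_substring \<omega> s)))"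
  have "\<forall>N0 j. \<exists>B N1 W \<Phi>. Good N0 j B N1 W \<Phi>"
  proof (intro allI)
    fix N0 j :: nat
    have "0 < (1/2::real)^j" by simp
    from config[OF Pp sP a0 a1 this, of N0] show "\<exists>B N1 W \<Phi>. Good N0 j B N1 W \<Phi>"
      unfolding Good_def .
  qed
  then obtain fB fN fW f\<Phi> where G: "\<And>N0 j. Good N0 j (fB N0 j) (fN N0 j) (fW N0 j) (f\<Phi> N0 j)"
    by metis
  define st where "st = rec_nat (1::nat) (\<lambda>j s. fN s j)"
  have st0: "st 0 = 1" unfolding st_def by simp
  have stS: "st (Suc j) = fN (st j) j" for j unfolding st_def by simp
  define Bj where "Bj = (\<lambda>j. fB (st j) j)"
  define Wj where "Wj = (\<lambda>j. fW (st j) j)"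
  define \<Phi>j where "\<Phi>j = (\<lambda>j. f\<Phi> (st j) j)"
  have Gj: "Good (st j) j (Bj j) (st (Suc j)) (Wj j) (\<Phi>j j)" for j
    using G[of "st j" j] unfolding Bj_def Wj_def \<Phi>j_def stS .
  have G1: "st j < st (Suc j)" for j using Gj[of j] unfolding Good_def by (elim conjE)
  have G2: "\<forall>n. Bj j n \<subseteq> {s. length s = n} \<and> real (card (Bj j n)) \<le> 2 powr (\<alpha> * real n)" for j
    using Gj[of j] unfolding Good_def by (elim conjE)
  have G3: "\<forall>n. Bj j n \<noteq> {} \<longrightarrow> st j \<le> n \<and> n < st (Suc j)" for j
    using Gj[of j] unfolding Good_def by (elim conjE)
  have G4: "measure P {\<omega>. \<Phi>j j (pre \<omega> (Wj j))} \<le> (1/2::real)^j" for j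
    using Gj[of j] unfolding Good_def by (elim conjE)
  have G5: "\<forall>\<omega>. \<not> \<Phi>j j (pre \<omega> (Wj j)) \<longrightarrow> (\<exists>n. \<exists>s\<in>Bj j n. has_substring \<omega> s)" for j
    using Gj[of j] unfolding Good_def by (elim conjE)
  have stlt: "st j < st (Suc j)" for j by (rule G1)
  have stsm: "strict_mono st" using stlt by (simp add: strict_mono_Suc_iff)
  have stge: "j + 1 \<le> st j" for j
  proof (induction j)
    case 0 then show ?case by (simp add: st0)
  next
    case (Suc j) then show ?case using stlt[of j] by simp
  qed
  have supp: "Bj j n \<noteq> {} \<Longrightarrow> st j \<le> n \<and> n < st (Suc j)" for j n
    using G3[of j] by blast
  have uniq: "Bj j n \<noteq> {} \<Longrightarrow> Bj j' n \<noteq> {} \<Longrightarrow> j' = j" for j j' n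
  proof (rule ccontr)
    assume h: "Bj j n \<noteq> {}" "Bj j' n \<noteq> {}" "j' \<noteq> j"
    show False
    proof (cases "j < j'")
      case True
      hence "st (Suc j) \<le> st j'" using stsm by (simp add: strict_mono_less_eq)
      thus False using supp[OF h(1)] supp[OF h(2)] by simp
    next
      case False
      hence "st (Suc j') \<le> st j" using h(3) stsm by (simp add: strict_mono_less_eq)
      thus False using supp[OF h(1)] supp[OF h(2)] by simp
    qed
  qed
  define A where "A = (\<lambda>n. \<Union>j. Bj j n)"
  have Aprops: "A n \<subseteq> {s. length s = n} \<and> real (card (A n)) \<le> 2 powr (\<alpha> * real n)" for n
  proof (cases "\<exists>j. Bj j n \<noteq> {}")
    case True
    then obtain j where j: "Bj j n \<noteq> {}" by blast
    have "A n = Bj j n"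
    proof -
      have "Bj j' n \<subseteq> Bj j n" for j' using uniq[OF j, of j'] by (cases "Bj j' n = {}") auto
      thus ?thesis unfolding A_def by blast
    qed
    thus ?thesis using G2[of j] by simp
  next
    case False
    hence "A n = {}" unfolding A_def by auto
    thus ?thesis by simp
  qed
  define D where "D = (\<lambda>j. {\<omega>. \<Phi>j j (pre \<omega> (Wj j))})"
  have Dmeas: "D j \<in> sets P" for j unfolding D_def by (rule pre_meas[OF sP])
  have Dle: "measure P (D j) \<le> (1/2)^j" for j using G4[of j] unfolding D_def .
  have summ: "summable (\<lambda>j. measure P (D j))"
  proof (rule summable_comparison_test[of _ "\<lambda>j. (1/2::real)^j"])
    show "\<exists>N. \<forall>n\<ge>N. norm (measure P (D n)) \<le> (1/2)^n" using Dle by auto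
    show "summable (\<lambda>j. (1/2::real)^j)" by (rule summable_geometric) simp
  qed
  have ae: "AE \<omega> in P. eventually (\<lambda>j. \<omega> \<in> space P - D j) sequentially"
    by (rule borel_cantelli_AE1) (use Dmeas summ in \<open>auto simp: less_top[symmetric]\<close>)
  have "AE \<omega> in P. infinite {i. i \<ge> 1 \<and> (\<exists>s\<in>A i. has_substring \<omega> s)}"
  proof (rule AE_mp[OF ae AE_I2], intro impI)
    fix \<omega> assume "eventually (\<lambda>j. \<omega> \<in> space P - D j) sequentially"
    then obtain J where J: "\<And>j. j \<ge> J \<Longrightarrow> \<omega> \<notin> D j" unfolding eventually_sequentially by blast
    show "infinite {i. i \<ge> 1 \<and> (\<exists>s\<in>A i. has_substring \<omega> s)}"
      unfolding infinite_nat_iff_unbounded_le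
    proof
      fix m
      define j where "j = max J m"
      have "\<omega> \<notin> D j" using J j_def by simp
      hence "\<not> \<Phi>j j (pre \<omega> (Wj j))" unfolding D_def by simp
      then obtain n s where ns: "s \<in> Bj j n" "has_substring \<omega> s"
        using G5[of j] by blast
      have "st j \<le> n" using supp[of j n] ns by blast
      hence "m < n" using stge[of j] j_def by simp
      moreover have "s \<in> A n" using ns unfolding A_def by blast
      ultimately show "\<exists>n\<ge>m. n \<in> {i. i \<ge> 1 \<and> (\<exists>s\<in>A i. has_substring \<omega> s)}"
        using ns by (intro exI[of _ n]) auto
    qed
  qed
  moreover have "\<forall>n\<ge>1. A n \<subseteq> {s. length s = n} \<and> real (card (A n)) \<le> 2 powr (\<alpha> * real n)"
    using Aprops by simp
  ultimately show ?thesis by (intro exI[of _ A] conjI)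
qed

end
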